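(* Let $H=\langle a,b,c\mid ac=ca,\ bc=cb,\ [a,b]=c\rangle$ be the integral Heisenberg group, identified with the group of matrices $\begin{bmatrix}1&x&z\\ &1&y\\ &&1\end{bmatrix}$ with $x,y,z\in\mathbb{Z}$. Let $L:H\rightarrow\mathbb{R}$ be a semi-norm, i.e. $L(gh)\le L(g)+L(h)$ and $L(g)=L(g^{-1})$ for any $g,h\in H$, and let $\mathrm{sL}(g)=\lim_{n\to\infty}\frac{L(g^n)}{n}$ be its stable norm. There exists a constant $K$ such that \[ \mathrm{sL}(g)\le K(|x|+|y|) \] for any $g=\begin{bmatrix}1&x&z\\ &1&y\\ &&1\end{bmatrix}\in H$.
   Context: One may take $K=\max\{L(s):s\in S\}$ with $S=\{a,b,a^{-1},b^{-1}\}$; the proof uses that the stable word length with respect to $S$ of such $g$ equals $|x|+|y|$. *)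

theory Defs
  imports "HOL-Analysis.Analysis"
begin

text \<open>The integral Heisenberg group, realised as upper unitriangular integer
3x3 matrices; the triple (x,y,z) stands for the matrix with entries
x (position 1,2), y (position 2,3), z (position 1,3).\<close>

type_synonym heis = "int \<times> int \<times> int"

definition heis_mult :: "heis \<Rightarrow> heis \<Rightarrow> heis" where
  "heis_mult g h = (case g of (x, y, z) \<Rightarrow> case h of (x', y', z') \<Rightarrow>
      (x + x', y + y', z + z' + x * y'))"

definition heis_one :: heis where
  "heis_one = (0, 0, 0)"

definition heis_inv :: "heis \<Rightarrow> heis" where
  "heis_inv g = (case g of (x, y, z) \<Rightarrow> (- x, - y, x * y - z))"

fun heis_pow :: "heis \<Rightarrow> nat \<Rightarrow> heis" where
  "heis_pow g 0 = heis_one"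
| "heis_pow g (Suc n) = heis_mult g (heis_pow g n)"

definition heis_seminorm :: "(heis \<Rightarrow> real) \<Rightarrow> bool" where
  "heis_seminorm L \<longleftrightarrow>
     (\<forall>g h. L (heis_mult g h) \<le> L g + L h) \<and> (\<forall>g. L g = L (heis_inv g))"

definition stable_norm :: "(heis \<Rightarrow> real) \<Rightarrow> heis \<Rightarrow> real" where
  "stable_norm L g = lim (\<lambda>n. L (heis_pow g n) / real n)"

end

theory Submission
  imports Defs
begin

lemma fekete_aux:
  fixes a :: "nat \<Rightarrow> real"
  assumes sub: "\<And>m n. a (m+n) \<le> a m + a n"
  shows "a (q*m + r) \<le> real q * a m + a r"
proof (induction q)
  case 0 then show ?case by simp
next
  case (Suc q)
  have "a (Suc q * m + r) = a (m + (q*m + r))" by (simp add: algebra_simps)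
  also have "\<dots> \<le> a m + a (q*m+r)" by (rule sub)
  finally show ?case using Suc by (simp add: algebra_simps)
qed

lemma fekete:
  fixes a :: "nat \<Rightarrow> real"
  assumes sub: "\<And>m n. a (m+n) \<le> a m + a n" and nn: "\<And>n. a n \<ge> 0"
  shows "(\<lambda>n. a n / real n) \<longlonglongrightarrow> (INF n\<in>{1..}. a n / real n)"
proof -
  define l where "l = (INF n\<in>{1..}. a n / real n)"
  have bdd: "bdd_below ((\<lambda>n. a n / real n) ` {1..})"
    by (rule bdd_belowI[where m=0]) (auto intro: divide_nonneg_nonneg nn)
  have low: "l \<le> a n / real n" if "n \<ge> 1" for n
    unfolding l_def using bdd that by (auto intro: cINF_lower)
  show ?thesis unfolding l_def[symmetric] lim_sequentially
  proof (intro allI impI)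
    fix e :: real assume e: "e > 0"
    have "l < l + e/2" using e by simp
    then have "\<exists>x\<in>{1..}. a x / real x < l + e/2"
      using cINF_less_iff[OF _ bdd] unfolding l_def by blast
    then obtain m where m: "m \<ge> 1" "a m / real m < l + e/2" by auto
    define S where "S = (\<Sum>r<m. a r)"
    have S0: "S \<ge> 0" unfolding S_def by (auto intro: sum_nonneg nn)
    have Sr: "a r \<le> S" if "r < m" for r
      unfolding S_def using that by (intro member_le_sum) (auto intro: nn)
    obtain N :: nat where N: "N > 2*S/e" using reals_Archimedean2 by blast
    show "\<exists>no. \<forall>n\<ge>no. dist (a n / real n) l < e"
    proof (intro exI[of _ "N+1"] allI impI)
      fix n assume n: "n \<ge> N+1"
      have npos: "real n > 0" using n by simp
      have "n = (n div m) * m + n mod m" by simp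
      then have "a n \<le> real (n div m) * a m + a (n mod m)"
        using fekete_aux[of a "n div m" m "n mod m", OF sub] by simp
      also have "real (n div m) * a m \<le> (real n / real m) * a m"
      proof (rule mult_right_mono[OF _ nn])
        have "real (n div m) * real m \<le> real n"
          by (metis of_nat_le_iff of_nat_mult div_times_less_eq_dividend)
        then show "real (n div m) \<le> real n / real m" using m by (simp add: field_simps)
      qed
      also have "a (n mod m) \<le> S" using Sr m by simp
      finally have "a n \<le> real n * (a m / real m) + S" by simp
      then have "a n / real n \<le> a m / real m + S / real n"
        using npos by (simp add: field_simps)
      also have "S / real n < e/2"
      proof -
        have "2*S/e < real n" using N n by simp
        then show ?thesis using e npos by (simp add: field_simps)
      qed
      finally have "a n / real n < l + e" using m by simp
      moreover have "l \<le> a n / real n" using low n by simp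
      ultimately show "dist (a n / real n) l < e" by (simp add: dist_real_def)
    qed
  qed
qed
lemma ineq:
  fixes x y z W k :: int
  assumes k: "k \<ge> 1" and W: "2*W = 2*(k*k)*z - x*y*(k*k)*(k*k+1)"
  shows "\<bar>W\<bar> \<le> ((k*k)*(\<bar>x\<bar>+\<bar>y\<bar>) + k*(\<bar>z\<bar>+1))^2"
proof -
  define n where "n = k*k"
  have n1: "n \<ge> 1" using k unfolding n_def by (metis mult_le_cancel_left1 order_trans zero_le_one dual_order.trans mult_left_mono mult_1_right zero_le_mult_iff)
  have "\<bar>2*W\<bar> \<le> 2*n*\<bar>z\<bar> + \<bar>x*y\<bar>*(n*(n+1))" using W n1 unfolding n_def[symmetric]
    by (simp add: abs_mult abs_triangle_ineq4 order_trans[OF abs_triangle_ineq4] mult.assoc)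
  also have "\<bar>x*y\<bar>*(n*(n+1)) \<le> \<bar>x*y\<bar>*(2*n*n)" using n1 by (intro mult_left_mono) (auto simp: algebra_simps)
  finally have "\<bar>W\<bar> \<le> n*\<bar>z\<bar> + \<bar>x\<bar>*\<bar>y\<bar>*n*n" by (simp add: abs_mult algebra_simps)
  also have "n*\<bar>z\<bar> \<le> (k*(\<bar>z\<bar>+1))^2" unfolding n_def power2_eq_square using k
    by (simp add: algebra_simps mult_left_mono mult_right_mono)
  also have "\<bar>x\<bar>*\<bar>y\<bar>*n*n \<le> (n*(\<bar>x\<bar>+\<bar>y\<bar>))^2"
  proof -
    have h: "\<bar>x\<bar>*\<bar>y\<bar> \<le> (\<bar>x\<bar>+\<bar>y\<bar>)*(\<bar>x\<bar>+\<bar>y\<bar>)"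
      by (simp add: algebra_simps)
    have "\<bar>x\<bar>*\<bar>y\<bar>*(n*n) \<le> (\<bar>x\<bar>+\<bar>y\<bar>)*(\<bar>x\<bar>+\<bar>y\<bar>)*(n*n)"
      by (rule mult_right_mono[OF h]) simp
    then show ?thesis by (simp add: power2_eq_square algebra_simps)
  qed
  also have "(k*(\<bar>z\<bar>+1))^2 + (n*(\<bar>x\<bar>+\<bar>y\<bar>))^2 \<le> (n*(\<bar>x\<bar>+\<bar>y\<bar>) + k*(\<bar>z\<bar>+1))^2"
    using k n1 by (simp add: power2_eq_square algebra_simps)
  finally show ?thesis unfolding n_def by simp
qed

lemma mult_assoc_h: "heis_mult (heis_mult g h) k = heis_mult g (heis_mult h k)"
  by (cases g; cases h; cases k) (simp add: heis_mult_def algebra_simps)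

lemma mult_one_h: "heis_mult heis_one h = h"
  by (cases h) (simp add: heis_mult_def heis_one_def)

lemma pow_add: "heis_pow g (m+n) = heis_mult (heis_pow g m) (heis_pow g n)"
  by (induction m) (simp_all add: mult_one_h mult_assoc_h)

lemma pow_form:
  "heis_pow (x,y,z) n = (int n * x, int n * y, Z) \<Longrightarrow> 2 * Z = 2 * int n * z + x*y*int n*(int n - 1)"
proof (induction n arbitrary: Z)
  case 0 then show ?case by (simp add: heis_one_def)
next
  case (Suc n)
  obtain X Y Z' where e: "heis_pow (x,y,z) n = (X,Y,Z')" by (metis prod_cases3)
  have XY: "X = int n * x" "Y = int n * y" using Suc.prems e by (auto simp: heis_mult_def algebra_simps)
  have "2*Z' = 2 * int n * z + x*y*int n*(int n - 1)" using Suc.IH e XY by simp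
  moreover have "Z = z + Z' + x * Y" using Suc.prems e by (simp add: heis_mult_def)
  ultimately show ?case using XY by (simp add: algebra_simps)
qed

lemma pow_fst: "\<exists>Z. heis_pow (x,y,z) n = (int n * x, int n * y, Z)"
  by (induction n) (auto simp: heis_one_def heis_mult_def algebra_simps)

context
  fixes L :: "heis \<Rightarrow> real"
  assumes sn: "heis_seminorm L"
begin

lemma sub: "L (heis_mult g h) \<le> L g + L h" using sn unfolding heis_seminorm_def by blast
lemma symm: "L (heis_inv g) = L g" using sn unfolding heis_seminorm_def by metis

lemma nonneg: "L g \<ge> 0"
proof -
  obtain x y z where g: "g = (x,y,z)" by (metis prod_cases3)
  have "heis_mult g (heis_inv g) = heis_one" by (simp add: g heis_mult_def heis_inv_def heis_one_def)
  then have "L heis_one \<le> 2 * L g" using sub[of g "heis_inv g"] symm[of g] by simp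
  moreover have "L heis_one \<le> 2 * L heis_one" using sub[of heis_one heis_one]
    by (simp add: heis_mult_def heis_one_def)
  ultimately show ?thesis by linarith
qed

lemma gen_nat:
  assumes "f 0 = heis_one" "\<And>k. f (Suc k) = heis_mult e (f k)"
  shows "L (f k) \<le> real k * L e + L heis_one"
proof (induction k)
  case 0 then show ?case using assms by simp
next
  case (Suc k)
  then show ?case using sub[of e "f k"] assms by (simp add: algebra_simps)
qed

lemma gen_a: "L (k, 0, 0) \<le> real_of_int \<bar>k\<bar> * L (1,0,0) + L heis_one"
proof -
  have n: "L (int n, 0, 0) \<le> real n * L (1,0,0) + L heis_one" for n
    by (rule gen_nat[where f="\<lambda>n. (int n, 0, 0)"]) (auto simp: heis_one_def heis_mult_def)
  show ?thesis
  proof (cases "k \<ge> 0")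
    case True then show ?thesis using n[of "nat k"] by simp
  next
    case False
    have "L (k,0,0) = L (heis_inv (int (nat (-k)), 0, 0))" using False by (simp add: heis_inv_def)
    then show ?thesis using n[of "nat (-k)"] symm False by simp
  qed
qed

lemma gen_b: "L (0, k, 0) \<le> real_of_int \<bar>k\<bar> * L (0,1,0) + L heis_one"
proof -
  have n: "L (0, int n, 0) \<le> real n * L (0,1,0) + L heis_one" for n
    by (rule gen_nat[where f="\<lambda>n. (0, int n, 0)"]) (auto simp: heis_one_def heis_mult_def)
  show ?thesis
  proof (cases "k \<ge> 0")
    case True then show ?thesis using n[of "nat k"] by simp
  next
    case False
    have "L (0,k,0) = L (heis_inv (0, int (nat (-k)), 0))" using False by (simp add: heis_inv_def)
    then show ?thesis using n[of "nat (-k)"] symm False by simp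
  qed
qed

lemma gen_c: "L (0, 0, k) \<le> real_of_int \<bar>k\<bar> * L (0,0,1) + L heis_one"
proof -
  have n: "L (0, 0, int n) \<le> real n * L (0,0,1) + L heis_one" for n
    by (rule gen_nat[where f="\<lambda>n. (0, 0, int n)"]) (auto simp: heis_one_def heis_mult_def)
  show ?thesis
  proof (cases "k \<ge> 0")
    case True then show ?thesis using n[of "nat k"] by simp
  next
    case False
    have "L (0,0,k) = L (heis_inv (0, 0, int (nat (-k))))" using False by (simp add: heis_inv_def)
    then show ?thesis using n[of "nat (-k)"] symm False by simp
  qed
qed

lemma comm: "L (0, 0, q*m) \<le> 2 * real_of_int \<bar>q\<bar> * L (1,0,0) + 2 * real_of_int \<bar>m\<bar> * L (0,1,0) + 4 * L heis_one"
proof -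
  have "(0,0,q*m) = heis_mult (q,0,0) (heis_mult (0,m,0) (heis_mult (-q,0,0) (0,-m,0)))"
    by (simp add: heis_mult_def)
  then have "L (0,0,q*m) \<le> L (q,0,0) + (L (0,m,0) + (L (-q,0,0) + L (0,-m,0)))"
  proof -
    have "L (heis_mult (-q,0,0) (0,-m,0)) \<le> L (-q,0,0) + L (0,-m,0)" by (rule sub)
    moreover have "L (heis_mult (0,m,0) (heis_mult (-q,0,0) (0,-m,0))) \<le> L (0,m,0) + L (heis_mult (-q,0,0) (0,-m,0))" by (rule sub)
    moreover have "L (heis_mult (q,0,0) (heis_mult (0,m,0) (heis_mult (-q,0,0) (0,-m,0)))) \<le> L (q,0,0) + L (heis_mult (0,m,0) (heis_mult (-q,0,0) (0,-m,0)))" by (rule sub)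
    ultimately show ?thesis using \<open>(0,0,q*m) = _\<close> by simp
  qed
  then show ?thesis using gen_a[of q] gen_a[of "-q"] gen_b[of m] gen_b[of "-m"] by simp
qed

lemma decomp: "L (X, Y, Z) \<le> L (X,0,0) + L (0,Y,0) + L (0,0,Z - X*Y)"
proof -
  have "(X,Y,Z) = heis_mult (X,0,0) (heis_mult (0,Y,0) (0,0,Z-X*Y))"
    by (simp add: heis_mult_def)
  moreover have "L (heis_mult (0,Y,0) (0,0,Z-X*Y)) \<le> L (0,Y,0) + L (0,0,Z-X*Y)" by (rule sub)
  moreover have "L (heis_mult (X,0,0) (heis_mult (0,Y,0) (0,0,Z-X*Y))) \<le> L (X,0,0) + L (heis_mult (0,Y,0) (0,0,Z-X*Y))" by (rule sub)
  ultimately show ?thesis by simp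
qed


lemma central:
  fixes W m :: int
  assumes m1: "m \<ge> 1" and Wm: "\<bar>W\<bar> \<le> m^2"
  shows "L (0,0,W) \<le> (4 * L (1,0,0) + 2 * L (0,1,0) + L (0,0,1)) * real_of_int m + 5 * L heis_one"
proof -
  define q where "q = W div m"
  define r where "r = W mod m"
  have Wqr: "W = q*m + r" unfolding q_def r_def by simp
  have r0: "0 \<le> r" "r < m" unfolding r_def using m1 by auto
  have "\<bar>q\<bar> * m = \<bar>W - r\<bar>" using Wqr m1 by (simp add: abs_mult)
  also have "\<dots> \<le> \<bar>W\<bar> + r" using r0 by simp
  also have "\<dots> \<le> m * (m+1)" using Wm r0 by (simp add: power2_eq_square algebra_simps)
  finally have "\<bar>q\<bar> * m \<le> (m+1) * m" by (simp add: algebra_simps)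
  then have qb: "\<bar>q\<bar> \<le> m + 1" using m1 by simp
  have "(0,0,W) = heis_mult (0,0,q*m) (0,0,r)" using Wqr by (simp add: heis_mult_def)
  then have "L (0,0,W) \<le> L (0,0,q*m) + L (0,0,r)" using sub by metis
  also have "\<dots> \<le> (2 * real_of_int \<bar>q\<bar> * L (1,0,0) + 2 * real_of_int \<bar>m\<bar> * L (0,1,0) + 4 * L heis_one)
     + (real_of_int \<bar>r\<bar> * L (0,0,1) + L heis_one)"
    using comm[of q m] gen_c[of r] by linarith
  also have "\<dots> \<le> (4 * L (1,0,0) + 2 * L (0,1,0) + L (0,0,1)) * real_of_int m + 5 * L heis_one"
  proof -
    have A: "real_of_int \<bar>q\<bar> * L (1,0,0) \<le> (2 * real_of_int m) * L (1,0,0)"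
      using qb m1 nonneg[of "(1,0,0)"] by (intro mult_right_mono) auto
    have C: "real_of_int \<bar>r\<bar> * L (0,0,1) \<le> real_of_int m * L (0,0,1)"
      using r0 nonneg[of "(0,0,1)"] by (intro mult_right_mono) auto
    show ?thesis using A C m1 by (simp add: algebra_simps)
  qed
  finally show ?thesis .
qed


lemma powbound:
  fixes k :: nat
  assumes k: "k \<ge> 1"
  shows "L (heis_pow (x,y,z) (k*k)) \<le> real (k*k) * \<bar>x\<bar> * L (1,0,0) + real (k*k) * \<bar>y\<bar> * L (0,1,0)
    + (4 * L (1,0,0) + 2 * L (0,1,0) + L (0,0,1)) * (real (k*k) * (\<bar>x\<bar>+\<bar>y\<bar>) + real k * (\<bar>z\<bar>+1)) + 7 * L heis_one"
proof -
  obtain Z where Z: "heis_pow (x,y,z) (k*k) = (int (k*k) * x, int (k*k) * y, Z)" using pow_fst by blast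
  have Z2: "2*Z = 2 * int (k*k) * z + x*y*int (k*k)*(int (k*k) - 1)" by (rule pow_form[OF Z])
  define W where "W = Z - (int (k*k) * x) * (int (k*k) * y)"
  have W2: "2*W = 2*(int k*int k)*z - x*y*(int k*int k)*(int k*int k+1)"
    unfolding W_def using Z2 by (simp add: algebra_simps)
  define m where "m = (int k*int k)*(\<bar>x\<bar>+\<bar>y\<bar>) + int k*(\<bar>z\<bar>+1)"
  have Wm: "\<bar>W\<bar> \<le> m^2" unfolding m_def by (rule ineq[OF _ W2]) (use k in simp)
  have m1: "m \<ge> 1"
  proof -
    have "int k * 1 \<le> int k * (\<bar>z\<bar>+1)" by (rule mult_left_mono) auto
    moreover have "0 \<le> (int k*int k)*(\<bar>x\<bar>+\<bar>y\<bar>)" by simp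
    ultimately show ?thesis unfolding m_def using k by linarith
  qed
  have "L (heis_pow (x,y,z) (k*k)) \<le> L (int (k*k) * x,0,0) + L (0,int (k*k) * y,0) + L (0,0,W)"
    unfolding Z W_def by (rule decomp)
  also have "\<dots> \<le> (real_of_int \<bar>int (k*k) * x\<bar> * L (1,0,0) + L heis_one) + (real_of_int \<bar>int (k*k) * y\<bar> * L (0,1,0) + L heis_one)
      + ((4 * L (1,0,0) + 2 * L (0,1,0) + L (0,0,1)) * real_of_int m + 5 * L heis_one)"
    using gen_a[of "int (k*k) * x"] gen_b[of "int (k*k) * y"] central[OF m1 Wm] by linarith
  also have "\<dots> = real (k*k) * \<bar>x\<bar> * L (1,0,0) + real (k*k) * \<bar>y\<bar> * L (0,1,0)
    + (4 * L (1,0,0) + 2 * L (0,1,0) + L (0,0,1)) * (real (k*k) * (\<bar>x\<bar>+\<bar>y\<bar>) + real k * (\<bar>z\<bar>+1)) + 7 * L heis_one"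
    unfolding m_def by (simp add: abs_mult algebra_simps)
  finally show ?thesis .
qed

end

theorem corollary24:
  fixes L :: "heis \<Rightarrow> real"
  assumes "heis_seminorm L"
  shows "\<exists>K::real. \<forall>x y z :: int.
           stable_norm L (x, y, z) \<le> K * (real_of_int \<bar>x\<bar> + real_of_int \<bar>y\<bar>)"
proof -
  note sn = assms
  define A where "A = L (1,0,0)"
  define B where "B = L (0,1,0)"
  define E where "E = L heis_one"
  define D where "D = 4 * L (1,0,0) + 2 * L (0,1,0) + L (0,0,1)"
  have A0: "A \<ge> 0" and B0: "B \<ge> 0" and E0: "E \<ge> 0" and D0: "D \<ge> 0"
    unfolding A_def B_def E_def D_def using nonneg[OF sn] by (auto intro: add_nonneg_nonneg)
  show ?thesis
  proof (intro exI[of _ "A+B+D"] allI)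
    fix x y z :: int
    define a where "a = (\<lambda>n. L (heis_pow (x,y,z) n))"
    define l where "l = (INF n\<in>{1..}. a n / real n)"
    have t: "(\<lambda>n. a n / real n) \<longlonglongrightarrow> l" unfolding l_def
      by (rule fekete) (auto simp: a_def pow_add sub[OF sn] nonneg[OF sn])
    have sl: "stable_norm L (x,y,z) = l" unfolding stable_norm_def
      using limI[OF t] by (simp add: a_def)
    define S where "S = (A+B+D) * (real_of_int \<bar>x\<bar> + real_of_int \<bar>y\<bar>)"
    define c where "c = D * (\<bar>z\<bar>+1) + 7 * E"
    have c0: "c \<ge> 0" unfolding c_def using D0 E0 by simp
    have bound: "l \<le> S + c / real k" if k: "k \<ge> 1" for k :: nat
    proof -
      have kk1: "k*k \<ge> 1" using k by (simp add: one_le_mult_iff)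
      have le: "l \<le> a (k*k) / real (k*k)" unfolding l_def
      proof (rule cINF_lower)
        show "k*k \<in> {1..}" using kk1 by simp
        show "bdd_below ((\<lambda>n. a n / real n) ` {1..})"
          by (rule bdd_belowI[where m=0]) (auto intro!: divide_nonneg_nonneg simp: a_def nonneg[OF sn])
      qed
      have pb: "a (k*k) \<le> real k * real k * \<bar>x\<bar> * A + real k * real k * \<bar>y\<bar> * B
        + D * (real k * real k * (\<bar>x\<bar>+\<bar>y\<bar>) + real k * (\<bar>z\<bar>+1)) + 7 * E"
        using powbound[OF sn k, of x y z] unfolding a_def A_def B_def D_def E_def by simp
      have p1: "real k * real k * \<bar>x\<bar> * A + real k * real k * \<bar>y\<bar> * B + D * (real k * real k * (\<bar>x\<bar>+\<bar>y\<bar>))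
          \<le> real k * real k * S"
      proof -
        have "\<bar>x\<bar> * A + \<bar>y\<bar> * B + D * (\<bar>x\<bar>+\<bar>y\<bar>) \<le> S"
          unfolding S_def using A0 B0 by (simp add: algebra_simps)
        then have "real k * real k * (\<bar>x\<bar> * A + \<bar>y\<bar> * B + D * (\<bar>x\<bar>+\<bar>y\<bar>)) \<le> real k * real k * S"
          by (intro mult_left_mono) auto
        then show ?thesis by (simp add: algebra_simps)
      qed
      have p2: "D * (real k * (\<bar>z\<bar>+1)) + 7 * E \<le> real k * c"
      proof -
        have "7 * E \<le> real k * (7 * E)" using k E0 by (simp add: mult_le_cancel_right1)
        then show ?thesis unfolding c_def by (simp add: algebra_simps)
      qed
      have "a (k*k) \<le> real k * real k * S + real k * c" using pb p1 p2 by (simp add: algebra_simps)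
      also have "\<dots> = real (k*k) * (S + c / real k)" using k by (simp add: field_simps)
      finally have "a (k*k) / real (k*k) \<le> S + c / real k" using kk1
        by (simp add: divide_le_eq mult.commute)
      then show ?thesis using le by linarith
    qed
    show "stable_norm L (x,y,z) \<le> S" unfolding S_def[symmetric] sl
    proof (rule ccontr)
      assume "\<not> l \<le> S"
      then have d: "l - S > 0" by simp
      obtain k :: nat where kc: "k > c / (l - S)" using reals_Archimedean2 by blast
      have "0 \<le> c / (l - S)" using c0 d by simp
      then have "real k > 0" using kc by linarith
      then have k1: "k \<ge> 1" by simp
      have "c < real k * (l - S)" using kc d by (simp add: field_simps)
      then have "c / real k < l - S" using k1 by (simp add: field_simps)
      then show False using bound[OF k1] by linarith
    qed
  qed
qed

end
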